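(* Let $d\ge3$, $n\ge1$, $0\le c<\frac{1}{d(d-1)}$, and let $$\rho(c,0)=\Big(\frac1{2d}-\frac{d-1}2c\Big)\sum_{i=0}^{d-1}|ii\rangle\langle ii|+\frac1{d(d-1)}\sum_{i<j}|\psi^-_{ij}\rangle\langle\psi^-_{ij}|+c\sum_{i<j}|\psi^+_{ij}\rangle\langle\psi^+_{ij}|.$$ Then the null space of $(\rho(c,0)^{PT})^{\otimes n}$ contains no nonzero vector of Schmidt rank less than three.
   Context: $|\psi^{\pm}_{ij}\rangle=\frac1{\sqrt2}(|ij\rangle\pm|ji\rangle)$, sums over $0\le i<j\le d-1$. $\rho^{PT}$ is the partial transpose on the second factor of $\mathbb{C}^d\otimes\mathbb{C}^d$. The operator acts on $(\mathbb{C}^d\otimes\mathbb{C}^d)^{\otimes n}$, regarded as a bipartite space $(\mathbb{C}^d)^{\otimes n}_A\otimes(\mathbb{C}^d)^{\otimes n}_B$ with the first factor of each copy belonging to $A$; Schmidt rank is with respect to this bipartition. *)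

theory Defs
  imports Complex_Main
begin

text \<open>Vectors of C^d (x) C^d are functions on index pairs (i,j), i,j < d.
  Operators are matrices given by their entries M p q.\<close>

definition ket :: "nat \<Rightarrow> nat \<Rightarrow> nat \<times> nat \<Rightarrow> complex" where
  "ket i j = (\<lambda>p. if p = (i, j) then 1 else 0)"

definition psi_plus :: "nat \<Rightarrow> nat \<Rightarrow> nat \<times> nat \<Rightarrow> complex" where
  "psi_plus i j = (\<lambda>p. (ket i j p + ket j i p) / complex_of_real (sqrt 2))"

definition psi_minus :: "nat \<Rightarrow> nat \<Rightarrow> nat \<times> nat \<Rightarrow> complex" where
  "psi_minus i j = (\<lambda>p. (ket i j p - ket j i p) / complex_of_real (sqrt 2))"

definition outer :: "('a \<Rightarrow> complex) \<Rightarrow> ('a \<Rightarrow> complex) \<Rightarrow> 'a \<Rightarrow> 'a \<Rightarrow> complex" where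
  "outer u v = (\<lambda>p q. u p * cnj (v q))"

definition pairs_lt :: "nat \<Rightarrow> (nat \<times> nat) set" where
  "pairs_lt d = {(i, j). i < j \<and> j < d}"

definition rho :: "nat \<Rightarrow> real \<Rightarrow> nat \<times> nat \<Rightarrow> nat \<times> nat \<Rightarrow> complex" where
  "rho d c = (\<lambda>p q.
     complex_of_real (1 / (2 * real d) - (real d - 1) / 2 * c)
       * (\<Sum>i<d. outer (ket i i) (ket i i) p q)
   + complex_of_real (1 / (real d * (real d - 1)))
       * (\<Sum>(i, j)\<in>pairs_lt d. outer (psi_minus i j) (psi_minus i j) p q)
   + complex_of_real c
       * (\<Sum>(i, j)\<in>pairs_lt d. outer (psi_plus i j) (psi_plus i j) p q))"

definition partial_transpose ::
  "(nat \<times> nat \<Rightarrow> nat \<times> nat \<Rightarrow> complex) \<Rightarrow> nat \<times> nat \<Rightarrow> nat \<times> nat \<Rightarrow> complex" where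
  "partial_transpose M = (\<lambda>(i, j) (k, l). M (i, l) (k, j))"

definition idx :: "nat \<Rightarrow> nat \<Rightarrow> nat list set" where
  "idx d n = {a. length a = n \<and> (\<forall>x\<in>set a. x < d)}"

text \<open>A vector of (C^d (x) C^d)^{(x) n}, regarded as A (x) B with A = first factors,
  B = second factors, is a function of (a, b) with a, b \<in> idx d n; copy k carries
  the basis index (a!k, b!k).\<close>

definition tensor_pow ::
  "nat \<Rightarrow> (nat \<times> nat \<Rightarrow> nat \<times> nat \<Rightarrow> complex)
     \<Rightarrow> nat list \<times> nat list \<Rightarrow> nat list \<times> nat list \<Rightarrow> complex" where
  "tensor_pow n M = (\<lambda>(a, b) (a', b'). \<Prod>k<n. M (a ! k, b ! k) (a' ! k, b' ! k))"

definition op_apply ::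
  "nat \<Rightarrow> nat \<Rightarrow> (nat list \<times> nat list \<Rightarrow> nat list \<times> nat list \<Rightarrow> complex)
     \<Rightarrow> (nat list \<times> nat list \<Rightarrow> complex) \<Rightarrow> nat list \<times> nat list \<Rightarrow> complex" where
  "op_apply d n M v = (\<lambda>p. \<Sum>q\<in>idx d n \<times> idx d n. M p q * v q)"

definition in_null_space ::
  "nat \<Rightarrow> nat \<Rightarrow> (nat list \<times> nat list \<Rightarrow> nat list \<times> nat list \<Rightarrow> complex)
     \<Rightarrow> (nat list \<times> nat list \<Rightarrow> complex) \<Rightarrow> bool" where
  "in_null_space d n M v \<longleftrightarrow> (\<forall>p\<in>idx d n \<times> idx d n. op_apply d n M v p = 0)"

definition nonzero_vec :: "nat \<Rightarrow> nat \<Rightarrow> (nat list \<times> nat list \<Rightarrow> complex) \<Rightarrow> bool" where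
  "nonzero_vec d n v \<longleftrightarrow> (\<exists>p\<in>idx d n \<times> idx d n. v p \<noteq> 0)"

definition schmidt_rank :: "nat \<Rightarrow> nat \<Rightarrow> (nat list \<times> nat list \<Rightarrow> complex) \<Rightarrow> nat" where
  "schmidt_rank d n v = (LEAST k. \<exists>x y :: nat \<Rightarrow> nat list \<Rightarrow> complex.
      \<forall>a\<in>idx d n. \<forall>b\<in>idx d n. v (a, b) = (\<Sum>r<k. x r a * y r b))"

end

theory Submission
  imports Defs
begin


lemma finite_idx: "finite (idx d n)"
proof -
  have "idx d n \<subseteq> {xs. set xs \<subseteq> {..<d} \<and> length xs = n}" by (auto simp: idx_def)
  moreover have "finite {xs. set xs \<subseteq> {..<d} \<and> length xs = n}"
    using finite_lists_length_eq[of "{..<d}" n] by simp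
  ultimately show ?thesis by (rule finite_subset)
qed

lemma idx_Suc: "idx d (Suc n) = (\<lambda>(i,a). i#a) ` ({..<d} \<times> idx d n)"
  by (auto simp: idx_def length_Suc_conv image_iff)

lemma Cons_idx: "i < d \<Longrightarrow> a \<in> idx d n \<Longrightarrow> i#a \<in> idx d (Suc n)"
  by (auto simp: idx_def)

lemma sum_idx_Suc: "(\<Sum>a\<in>idx d (Suc n). f a) = (\<Sum>i<d. \<Sum>a\<in>idx d n. f (i#a))"
proof -
  have inj: "inj_on (\<lambda>(i,a). i#a) ({..<d} \<times> idx d n)" by (auto simp: inj_on_def)
  have "(\<Sum>a\<in>idx d (Suc n). f a) = (\<Sum>p\<in>{..<d} \<times> idx d n. f ((\<lambda>(i,a). i#a) p))"
    unfolding idx_Suc by (subst sum.reindex[OF inj]) simp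
  also have "\<dots> = (\<Sum>i<d. \<Sum>a\<in>idx d n. f (i#a))"
    by (simp add: sum.cartesian_product split_def)
  finally show ?thesis .
qed

lemma tensor_pow_Suc:
  "tensor_pow (Suc n) M (i#a, j#b) (k#a', l#b') = M (i,j) (k,l) * tensor_pow n M (a,b) (a',b')"
  unfolding tensor_pow_def by (simp add: prod.lessThan_Suc_shift del: prod.lessThan_Suc)

lemma sum_prod_split: "(\<Sum>q\<in>A\<times>B. g q) = (\<Sum>x\<in>A. \<Sum>y\<in>B. g (x,y))"
  by (simp add: sum.cartesian_product)

lemma op_apply_Suc:
  "op_apply d (Suc n) (tensor_pow (Suc n) M) v (i#a, j#b) =
   (\<Sum>k<d. \<Sum>l<d. M (i,j) (k,l) * op_apply d n (tensor_pow n M) (\<lambda>(a',b'). v (k#a', l#b')) (a,b))"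
proof -
  have "op_apply d (Suc n) (tensor_pow (Suc n) M) v (i#a, j#b) =
     (\<Sum>a'\<in>idx d (Suc n). \<Sum>b'\<in>idx d (Suc n). tensor_pow (Suc n) M (i#a, j#b) (a',b') * v (a',b'))"
    unfolding op_apply_def by (simp add: sum_prod_split)
  also have "\<dots> = (\<Sum>k<d. \<Sum>a'\<in>idx d n. \<Sum>l<d. \<Sum>b'\<in>idx d n.
       M (i,j) (k,l) * (tensor_pow n M (a,b) (a',b') * v (k#a', l#b')))"
    by (simp add: sum_idx_Suc tensor_pow_Suc mult.assoc)
  also have "\<dots> = (\<Sum>k<d. \<Sum>l<d. \<Sum>a'\<in>idx d n. \<Sum>b'\<in>idx d n.
       M (i,j) (k,l) * (tensor_pow n M (a,b) (a',b') * v (k#a', l#b')))"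
    by (rule sum.cong[OF refl], rule sum.swap)
  also have "\<dots> = (\<Sum>k<d. \<Sum>l<d. M (i,j) (k,l) * op_apply d n (tensor_pow n M) (\<lambda>(a',b'). v (k#a', l#b')) (a,b))"
    unfolding op_apply_def by (simp add: sum_distrib_left sum_prod_split)
  finally show ?thesis .
qed

lemma det3:
  fixes p0 p1 p2 q0 q1 q2 r0 r1 r2 u0 u1 u2 :: complex
  assumes "p0*q1 + r0*u1 = 0" "p0*q2 + r0*u2 = 0" "p1*q0 + r1*u0 = 0"
    "p1*q2 + r1*u2 = 0" "p2*q0 + r2*u0 = 0" "p2*q1 + r2*u1 = 0"
  shows "(p0*q0 + r0*u0) * (p1*q1 + r1*u1) * (p2*q2 + r2*u2) = 0"
proof -
  have "(p0*q0 + r0*u0) * ((p1*q1 + r1*u1) * (p2*q2 + r2*u2) - (p1*q2 + r1*u2)*(p2*q1 + r2*u1))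
      - (p0*q1 + r0*u1) * ((p1*q0 + r1*u0) * (p2*q2 + r2*u2) - (p1*q2 + r1*u2)*(p2*q0 + r2*u0))
      + (p0*q2 + r0*u2) * ((p1*q0 + r1*u0) * (p2*q1 + r2*u1) - (p1*q1 + r1*u1)*(p2*q0 + r2*u0)) = 0"
    by algebra
  then show ?thesis using assms by (simp add: mult.assoc)
qed



lemma finite_pairs: "finite (pairs_lt d)"
  by (rule finite_subset[of _ "{..<d} \<times> {..<d}"]) (auto simp: pairs_lt_def)

lemma sum_single: "finite S \<Longrightarrow> p0 \<in> S \<Longrightarrow> (\<And>p. p \<in> S \<Longrightarrow> p \<noteq> p0 \<Longrightarrow> f p = 0) \<Longrightarrow> sum f S = f p0"
  by (simp add: sum.remove sum.neutral)

lemma sqrt2c: "complex_of_real (sqrt 2) * complex_of_real (sqrt 2) = 2"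
proof -
  have "complex_of_real (sqrt 2) * complex_of_real (sqrt 2) = complex_of_real (sqrt 2 * sqrt 2)"
    by (simp only: of_real_mult)
  also have "\<dots> = 2" by simp
  finally show ?thesis .
qed

lemma S_ket: "(\<Sum>m<d. outer (ket m m) (ket m m) (x,y) (z,w)) = (if x=y \<and> z=w \<and> x=z \<and> x < d then 1 else 0)"
proof -
  have "\<And>m. outer (ket m m) (ket m m) (x,y) (z,w) = (if m = x then (if x=y \<and> z=w \<and> x=z then 1 else 0) else 0)"
    by (auto simp: outer_def ket_def)
  then show ?thesis by simp
qed

lemma S_minus:
  assumes "x < d" "y < d"
  shows "(\<Sum>(m,m')\<in>pairs_lt d. outer (psi_minus m m') (psi_minus m m') (x,y) (z,w)) =
    (if x \<noteq> y then ((if (z,w)=(x,y) then 1 else 0) - (if (z,w)=(y,x) then 1 else 0))/2 else 0)"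
proof (cases "x = y")
  case True
  then show ?thesis
    by (auto simp: outer_def psi_minus_def ket_def pairs_lt_def intro!: sum.neutral)
next
  case False
  let ?p0 = "(min x y, max x y)"
  have "(\<Sum>(m,m')\<in>pairs_lt d. outer (psi_minus m m') (psi_minus m m') (x,y) (z,w))
      = (case ?p0 of (m,m') \<Rightarrow> outer (psi_minus m m') (psi_minus m m') (x,y) (z,w))"
    apply (rule sum_single[OF finite_pairs])
    using False assms apply (auto simp: pairs_lt_def min_def max_def)[1]
    using False apply (auto simp: pairs_lt_def outer_def psi_minus_def ket_def min_def max_def split: if_splits)
    done
  also have "\<dots> = ((if (z,w)=(x,y) then 1 else 0) - (if (z,w)=(y,x) then 1 else 0))/2"
    using False by (auto simp: outer_def psi_minus_def ket_def min_def max_def sqrt2c)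
  finally show ?thesis using False by simp
qed

lemma S_plus:
  assumes "x < d" "y < d"
  shows "(\<Sum>(m,m')\<in>pairs_lt d. outer (psi_plus m m') (psi_plus m m') (x,y) (z,w)) =
    (if x \<noteq> y then ((if (z,w)=(x,y) then 1 else 0) + (if (z,w)=(y,x) then 1 else 0))/2 else 0)"
proof (cases "x = y")
  case True
  then show ?thesis
    by (auto simp: outer_def psi_plus_def ket_def pairs_lt_def intro!: sum.neutral)
next
  case False
  let ?p0 = "(min x y, max x y)"
  have "(\<Sum>(m,m')\<in>pairs_lt d. outer (psi_plus m m') (psi_plus m m') (x,y) (z,w))
      = (case ?p0 of (m,m') \<Rightarrow> outer (psi_plus m m') (psi_plus m m') (x,y) (z,w))"
    apply (rule sum_single[OF finite_pairs])
    using False assms apply (auto simp: pairs_lt_def min_def max_def)[1]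
    using False apply (auto simp: pairs_lt_def outer_def psi_plus_def ket_def min_def max_def split: if_splits)
    done
  also have "\<dots> = ((if (z,w)=(x,y) then 1 else 0) + (if (z,w)=(y,x) then 1 else 0))/2"
    using False by (auto simp: outer_def psi_plus_def ket_def min_def max_def sqrt2c)
  finally show ?thesis using False by simp
qed

definition "alpha d c = complex_of_real (1 / (2 * real d) - (real d - 1) / 2 * c)"
definition "beta d = complex_of_real (1 / (real d * (real d - 1)))"

lemma E1:
  assumes "i < d" "j < d" "i \<noteq> j" "k < d" "l < d"
  shows "partial_transpose (rho d c) (i,j) (k,l) = (if k = i \<and> l = j then (beta d + of_real c) / 2 else 0)"
proof (cases "k = i \<and> l = j")
  case True
  then show ?thesis using assms unfolding partial_transpose_def rho_def beta_def
    by (simp add: S_ket S_minus S_plus)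
next
  case False
  then show ?thesis using assms unfolding partial_transpose_def rho_def
    by (auto simp add: S_ket S_minus S_plus)
qed

lemma E2:
  assumes "i < d" "k < d" "l < d"
  shows "partial_transpose (rho d c) (i,i) (k,l) = (if k = l then (if k = i then alpha d c else (of_real c - beta d) / 2) else 0)"
proof -
  consider "k = l" "k = i" | "k = l" "k \<noteq> i" | "k \<noteq> l" by blast
  then show ?thesis
  proof cases
    case 1
    then show ?thesis using assms unfolding partial_transpose_def rho_def alpha_def
      by (simp add: S_ket S_minus S_plus)
  next
    case 2
    then show ?thesis using assms unfolding partial_transpose_def rho_def beta_def
      by (simp add: S_ket S_minus S_plus diff_divide_distrib)
  next
    case 3
    then show ?thesis using assms unfolding partial_transpose_def rho_def
      by (simp add: S_ket S_minus S_plus)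
  qed
qed


definition rk2 :: "nat \<Rightarrow> nat \<Rightarrow> (nat list \<times> nat list \<Rightarrow> complex) \<Rightarrow> bool" where
  "rk2 d n V \<longleftrightarrow> (\<exists>x1 y1 x2 y2. \<forall>a\<in>idx d n. \<forall>b\<in>idx d n. V (a,b) = x1 a * y1 b + x2 a * y2 b)"

lemma sum_delta2:
  fixes g :: complex and d :: nat
  assumes "i < d" "j < d"
  shows "(\<Sum>k<d. \<Sum>l<d. (if k = i \<and> l = j then g else 0) * f k l) = g * f i j"
proof -
  have "\<And>k. (\<Sum>l<d. (if k = i \<and> l = j then g else 0) * f k l) = (if k = i then g * f i j else 0)"
  proof -
    fix k show "(\<Sum>l<d. (if k = i \<and> l = j then g else 0) * f k l) = (if k = i then g * f i j else 0)"
    proof (cases "k = i")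
      case True
      have "\<And>l. (if k = i \<and> l = j then g else 0) * f k l = (if l = j then g * f i j else 0)" using True by simp
      then show ?thesis using True assms by simp
    qed simp
  qed
  then show ?thesis using assms by simp
qed

lemma sum_diag:
  fixes a0 e :: complex and d :: nat
  assumes "i < d"
  shows "(\<Sum>k<d. \<Sum>l<d. (if k = l then (if k = i then a0 else e) else 0) * f k l)
     = (a0 - e) * f i i + e * (\<Sum>k<d. f k k)"
proof -
  have "\<And>k. (\<Sum>l<d. (if k = l then (if k = i then a0 else e) else 0) * f k l) =
     (if k < d then (if k = i then a0 else e) * f k k else 0)"
  proof -
    fix k
    have "\<And>l. (if k = l then (if k = i then a0 else e) else 0) * f k l = (if l = k then (if k = i then a0 else e) * f k k else 0)"
      by auto
    then show "(\<Sum>l<d. (if k = l then (if k = i then a0 else e) else 0) * f k l) =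
     (if k < d then (if k = i then a0 else e) * f k k else 0)" by simp
  qed
  then have "(\<Sum>k<d. \<Sum>l<d. (if k = l then (if k = i then a0 else e) else 0) * f k l)
     = (\<Sum>k<d. (if k = i then a0 else e) * f k k)" by simp
  also have "\<dots> = (\<Sum>k<d. e * f k k + (if k = i then (a0 - e) * f k k else 0))"
    by (rule sum.cong) (auto simp: algebra_simps)
  also have "\<dots> = (a0 - e) * f i i + e * (\<Sum>k<d. f k k)"
    using assms by (simp add: sum.distrib sum_distrib_left)
  finally show ?thesis .
qed

lemma idx0: "idx d 0 = {[]}" by (auto simp: idx_def)

lemma core:
  fixes M :: "nat \<times> nat \<Rightarrow> nat \<times> nat \<Rightarrow> complex" and g a0 e :: complex
  assumes d3: "d \<ge> 3"
    and off: "\<And>i j k l. i<d \<Longrightarrow> j<d \<Longrightarrow> i\<noteq>j \<Longrightarrow> k<d \<Longrightarrow> l<d \<Longrightarrow> M (i,j) (k,l) = (if k=i \<and> l=j then g else 0)"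
    and dg: "\<And>i k l. i<d \<Longrightarrow> k<d \<Longrightarrow> l<d \<Longrightarrow> M (i,i) (k,l) = (if k=l then (if k=i then a0 else e) else 0)"
    and g0: "g \<noteq> 0" and ae: "a0 \<noteq> e"
  shows "in_null_space d n (tensor_pow n M) V \<Longrightarrow> rk2 d n V \<Longrightarrow> \<forall>a\<in>idx d n. \<forall>b\<in>idx d n. V (a,b) = 0"
proof (induction n arbitrary: V)
  case 0
  then have "op_apply d 0 (tensor_pow 0 M) V ([],[]) = 0" unfolding in_null_space_def by (simp add: idx0)
  then show ?case by (simp add: idx0 op_apply_def tensor_pow_def)
next
  case (Suc n)
  from Suc.prems(2) obtain x1 y1 x2 y2 where rep:
    "\<forall>a\<in>idx d (Suc n). \<forall>b\<in>idx d (Suc n). V (a,b) = x1 a * y1 b + x2 a * y2 b"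
    unfolding rk2_def by blast
  define W where "W k l = (\<lambda>(a'::nat list,b'::nat list). V (k#a', l#b'))" for k l
  have rkW: "rk2 d n (W k l)" if "k < d" "l < d" for k l
    unfolding rk2_def W_def
    by (rule exI[of _ "\<lambda>a. x1 (k#a)"], rule exI[of _ "\<lambda>b. y1 (l#b)"],
        rule exI[of _ "\<lambda>a. x2 (k#a)"], rule exI[of _ "\<lambda>b. y2 (l#b)"])
      (use rep Cons_idx that in auto)
  define w where "w k l = op_apply d n (tensor_pow n M) (W k l)" for k l
  have cond: "(\<Sum>k<d. \<Sum>l<d. M (i,j) (k,l) * w k l (a,b)) = 0"
    if "i < d" "j < d" "a \<in> idx d n" "b \<in> idx d n" for i j a b
  proof -
    have "op_apply d (Suc n) (tensor_pow (Suc n) M) V (i#a, j#b) = 0"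
      using Suc.prems(1) Cons_idx that unfolding in_null_space_def by blast
    then show ?thesis unfolding op_apply_Suc w_def W_def by simp
  qed
  have offz: "\<forall>a\<in>idx d n. \<forall>b\<in>idx d n. W i j (a,b) = 0" if "i < d" "j < d" "i \<noteq> j" for i j
  proof -
    have "in_null_space d n (tensor_pow n M) (W i j)"
      unfolding in_null_space_def
    proof
      fix p assume p: "p \<in> idx d n \<times> idx d n"
      obtain a b where ab: "p = (a,b)" by (cases p)
      have "(\<Sum>k<d. \<Sum>l<d. M (i,j) (k,l) * w k l (a,b)) = 0" using cond that p ab by auto
      moreover have "(\<Sum>k<d. \<Sum>l<d. M (i,j) (k,l) * w k l (a,b)) =
          (\<Sum>k<d. \<Sum>l<d. (if k=i \<and> l=j then g else 0) * w k l (a,b))"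
        using off that by (intro sum.cong refl) auto
      ultimately have "g * w i j (a,b) = 0" using sum_delta2[OF that(1,2)] by simp
      then show "op_apply d n (tensor_pow n M) (W i j) p = 0" using g0 ab w_def by simp
    qed
    then show ?thesis using Suc.IH rkW that by blast
  qed
  have diag_eq: "w i i (a,b) = w j j (a,b)"
    if "i < d" "j < d" "a \<in> idx d n" "b \<in> idx d n" for i j a b
  proof -
    have key: "(a0 - e) * w i i (a,b) = - e * (\<Sum>k<d. w k k (a,b))" if "i < d" for i
    proof -
      have "(\<Sum>k<d. \<Sum>l<d. M (i,i) (k,l) * w k l (a,b)) = 0" using cond that \<open>a \<in> idx d n\<close> \<open>b \<in> idx d n\<close> by auto
      moreover have "(\<Sum>k<d. \<Sum>l<d. M (i,i) (k,l) * w k l (a,b)) =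
          (\<Sum>k<d. \<Sum>l<d. (if k=l then (if k=i then a0 else e) else 0) * w k l (a,b))"
        using dg that by (intro sum.cong refl) auto
      ultimately show ?thesis using sum_diag[OF that, of a0 e "\<lambda>k l. w k l (a,b)"]
        by (simp add: algebra_simps add_eq_0_iff2)
    qed
    have "(a0 - e) * w i i (a,b) = (a0 - e) * w j j (a,b)" using key that by simp
    then show ?thesis using ae by simp
  qed
  have "\<exists>i0<3. \<forall>a\<in>idx d n. \<forall>b\<in>idx d n. W i0 i0 (a,b) = 0"
  proof (rule ccontr)
    assume "\<not> ?thesis"
    then have "\<forall>s<3. \<exists>a\<in>idx d n. \<exists>b\<in>idx d n. W s s (a,b) \<noteq> 0" by blast
    then obtain A B where AB: "\<And>s. s < 3 \<Longrightarrow> A s \<in> idx d n \<and> B s \<in> idx d n \<and> W s s (A s, B s) \<noteq> 0"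
      by metis
    define p where "p s = x1 (s # A s)" for s
    define r where "r s = x2 (s # A s)" for s
    define q where "q t = y1 (t # B t)" for t
    define u where "u t = y2 (t # B t)" for t
    have m: "W s t (A s, B t) = p s * q t + r s * u t" if "s < 3" "t < 3" for s t
      using rep AB[OF that(1)] AB[OF that(2)] Cons_idx[of s d] Cons_idx[of t d] that d3
      unfolding W_def p_def q_def r_def u_def by auto
    have z: "p s * q t + r s * u t = 0" if "s < 3" "t < 3" "s \<noteq> t" for s t
      using m[OF that(1,2)] offz[of s t] AB that d3 by auto
    have "(p 0 * q 0 + r 0 * u 0) * (p 1 * q 1 + r 1 * u 1) * (p 2 * q 2 + r 2 * u 2) = 0"
      by (rule det3) (rule z; simp)+
    then show False using AB[of 0] AB[of 1] AB[of 2] m[of 0 0] m[of 1 1] m[of 2 2] by auto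
  qed
  then obtain i0 where i0: "i0 < 3" "\<forall>a\<in>idx d n. \<forall>b\<in>idx d n. W i0 i0 (a,b) = 0" by blast
  have wi0: "w i0 i0 (a,b) = 0" for a b
    unfolding w_def op_apply_def using i0(2) by (auto intro!: sum.neutral)
  have diagz: "\<forall>a\<in>idx d n. \<forall>b\<in>idx d n. W j j (a,b) = 0" if "j < d" for j
  proof -
    have "in_null_space d n (tensor_pow n M) (W j j)"
      unfolding in_null_space_def
    proof
      fix p assume p: "p \<in> idx d n \<times> idx d n"
      obtain a b where ab: "p = (a,b)" by (cases p)
      have "w j j (a,b) = w i0 i0 (a,b)" using diag_eq[of j i0 a b] that i0 d3 p ab by auto
      then show "op_apply d n (tensor_pow n M) (W j j) p = 0" using wi0 ab w_def by simp
    qed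
    then show ?thesis using Suc.IH rkW that by blast
  qed
  have allz: "W k l (a,b) = 0" if "k < d" "l < d" "a \<in> idx d n" "b \<in> idx d n" for k l a b
    using offz diagz that by (cases "k = l") auto
  show ?case
  proof (intro ballI)
    fix a b assume "a \<in> idx d (Suc n)" "b \<in> idx d (Suc n)"
    then obtain k a' l b' where "a = k # a'" "b = l # b'" "k < d" "l < d" "a' \<in> idx d n" "b' \<in> idx d n"
      unfolding idx_Suc by auto
    then show "V (a,b) = 0" using allz[of k l a' b'] unfolding W_def by simp
  qed
qed


lemma rank_exists:
  "\<exists>k. \<exists>x y :: nat \<Rightarrow> nat list \<Rightarrow> complex.
      \<forall>a\<in>idx d n. \<forall>b\<in>idx d n. v (a, b) = (\<Sum>r<k. x r a * y r b)"
proof -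
  obtain xs where xs: "set xs = idx d n" "distinct xs"
    using finite_distinct_list[OF finite_idx] by blast
  have "\<forall>a\<in>idx d n. \<forall>b\<in>idx d n. v (a, b) =
     (\<Sum>r<length xs. (\<lambda>r a. if a = xs ! r then 1 else 0) r a * (\<lambda>r b. v (xs ! r, b)) r b)"
  proof (intro ballI)
    fix a b assume a: "a \<in> idx d n" and b: "b \<in> idx d n"
    then obtain r0 where r0: "r0 < length xs" "xs ! r0 = a" using xs(1) by (metis in_set_conv_nth)
    have "(\<Sum>r<length xs. (if a = xs ! r then 1 else 0) * v (xs ! r, b)) =
        (if a = xs ! r0 then 1 else 0) * v (xs ! r0, b)"
      by (rule sum_single) (use r0 xs(2) nth_eq_iff_index_eq in auto)
    then show "v (a, b) = (\<Sum>r<length xs. (\<lambda>r a. if a = xs ! r then 1 else 0) r a * (\<lambda>r b. v (xs ! r, b)) r b)"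
      using r0 by simp
  qed
  then show ?thesis
    by (intro exI[of _ "length xs"] exI[of _ "\<lambda>r a. if a = xs ! r then 1 else 0"]
        exI[of _ "\<lambda>r b. v (xs ! r, b)"]) simp
qed

lemma real_facts:
  fixes d :: nat and c :: real
  assumes "d \<ge> 3" "0 \<le> c" "c < 1 / (real d * (real d - 1))"
  shows "1 / (real d * (real d - 1)) + c > 0"
    and "1 / (2 * real d) - (real d - 1) / 2 * c - (c - 1 / (real d * (real d - 1))) / 2 > 0"
proof -
  have D: "real d \<ge> 3" using assms by simp
  have pos: "real d * (real d - 1) > 0" using D by simp
  show "1 / (real d * (real d - 1)) + c > 0" using pos assms by simp
  have cc: "c * (real d * (real d - 1)) < 1" using assms pos by (simp add: field_simps)
  have "1 / (2 * real d) - (real d - 1) / 2 * c - (c - 1 / (real d * (real d - 1))) / 2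
      = (1 - c * (real d * (real d - 1))) / (2 * (real d - 1))"
    using D by (simp add: field_simps)
  also have "\<dots> > 0" using cc D by simp
  finally show "1 / (2 * real d) - (real d - 1) / 2 * c - (c - 1 / (real d * (real d - 1))) / 2 > 0" .
qed

theorem theorem3:
  fixes d n :: nat and c :: real and v :: "nat list \<times> nat list \<Rightarrow> complex"
  assumes "d \<ge> 3" and "n \<ge> 1" and "0 \<le> c" and "c < 1 / (real d * (real d - 1))"
    and "in_null_space d n (tensor_pow n (partial_transpose (rho d c))) v"
    and "nonzero_vec d n v"
  shows "schmidt_rank d n v \<ge> 3"
proof (rule ccontr)
  assume "\<not> schmidt_rank d n v \<ge> 3"
  then have k3: "schmidt_rank d n v < 3" by simp
  define P where "P k = (\<exists>x y :: nat \<Rightarrow> nat list \<Rightarrow> complex.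
      \<forall>a\<in>idx d n. \<forall>b\<in>idx d n. v (a, b) = (\<Sum>r<k. x r a * y r b))" for k
  have "P (schmidt_rank d n v)"
    unfolding schmidt_rank_def P_def by (rule LeastI_ex) (rule rank_exists)
  then obtain x y where xy: "\<forall>a\<in>idx d n. \<forall>b\<in>idx d n. v (a, b) = (\<Sum>r<schmidt_rank d n v. x r a * y r b)"
    unfolding P_def by blast
  have rk: "rk2 d n v"
  proof -
    let ?k = "schmidt_rank d n v"
    have "\<forall>a\<in>idx d n. \<forall>b\<in>idx d n. v (a, b) =
      (if ?k > 0 then x 0 a else 0) * y 0 b + (if ?k > 1 then x 1 a else 0) * y 1 b"
    proof -
      consider "?k = 0" | "?k = 1" | "?k = 2" using k3 by linarith
      then show ?thesis
      proof cases
        case 1 then show ?thesis using xy by simp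
      next
        case 2 then show ?thesis using xy by simp
      next
        case 3 then show ?thesis using xy by (simp add: numeral_2_eq_2)
      qed
    qed
    then show ?thesis unfolding rk2_def
      by (intro exI[of _ "\<lambda>a. if ?k > 0 then x 0 a else 0"] exI[of _ "y 0"]
          exI[of _ "\<lambda>a. if ?k > 1 then x 1 a else 0"] exI[of _ "y 1"])
  qed
  have rf: "1 / (real d * (real d - 1)) + c > 0"
    "1 / (2 * real d) - (real d - 1) / 2 * c - (c - 1 / (real d * (real d - 1))) / 2 > 0"
    using real_facts assms(1,3,4) by auto
  define X where "X = (1 / (real d * (real d - 1)) + c) / 2"
  define Y where "Y = 1 / (2 * real d) - (real d - 1) / 2 * c - (c - 1 / (real d * (real d - 1))) / 2"
  have X0: "X \<noteq> 0" using rf(1) unfolding X_def by simp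
  have Y0: "Y \<noteq> 0" using rf(2) unfolding Y_def by simp
  have g0: "(beta d + of_real c) / 2 \<noteq> 0"
  proof -
    have "(beta d + of_real c) / 2 = of_real X"
      unfolding beta_def X_def by simp
    then show ?thesis using X0 by simp
  qed
  have ae: "alpha d c \<noteq> (of_real c - beta d) / 2"
  proof
    assume "alpha d c = (of_real c - beta d) / 2"
    then have "alpha d c - (of_real c - beta d) / 2 = 0" by simp
    moreover have "alpha d c - (of_real c - beta d) / 2 = of_real Y"
      unfolding alpha_def beta_def Y_def by simp
    ultimately show False using Y0 by simp
  qed
  have "\<forall>a\<in>idx d n. \<forall>b\<in>idx d n. v (a,b) = 0"
    by (rule core[OF assms(1) E1 E2 g0 ae assms(5) rk])
  then show False using assms(6) unfolding nonzero_vec_def by auto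
qed

end
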